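(* Let $(\mathcal E,S,\Theta_A(\mathcal E))$ and $(\mathcal F,T,\Theta_A(\mathcal F))$ be right functional $A$-modules and $(X,f)$ a functional module homomorphism between them with $X$ surjective. Then $(X,f)$ induces a ring homomorphism $\sigma\colon\mathcal K_A(\mathcal E)\to\mathcal K_A(\mathcal F)$, and $f$ is injective. If $(X,f)$ is an isomorphism (i.e. $X$ and $f$ are bijective), then $\sigma$ is an isomorphism and extends to an isomorphism $\mathcal L_A(\mathcal E)\to\mathcal L_A(\mathcal F)$.
   Context: $G$ is a discrete group; $(A,\alpha)$ is an associative ring (not necessarily commutative or unital) with $G$-action. A right functional $A$-module is a right $A$-module $\mathcal E$ with a $G$-action $S$ by additive bijections with $S_g(\xi a)=S_g(\xi)\alpha_g(a)$, together with a functional space $\Theta_A(\mathcal E)\subseteq\mathrm{Hom}_A(\mathcal E,A)$ which is a left $A$-submodule ($(a\varphi)(\xi)=a\varphi(\xi)$) invariant under $\varphi\mapsto\alpha_g\circ\varphi\circ S_{g^{-1}}$. The compact operators $\mathcal K_A(\mathcal E)$ are the finite sums of $\theta_{\eta,\varphi}(\xi)=\eta\varphi(\xi)$ ($\eta\in\mathcal E$, $\varphi\in\Theta_A(\mathcal E)$); the adjointable operators $\mathcal L_A(\mathcal E)$ are the $V\in\mathrm{Hom}_A(\mathcal E,\mathcal E)$ with $\varphi\circ V\in\Theta_A(\mathcal E)$ for all $\varphi\in\Theta_A(\mathcal E)$. A functional module homomorphism $(X,f)$ from $\mathcal E$ to $\mathcal F$ consists of a $G$-equivariant right $A$-module homomorphism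 $X\colon\mathcal E\to\mathcal F$ and a $G$-equivariant left $A$-module homomorphism $f\colon\Theta_A(\mathcal E)\to\Theta_A(\mathcal F)$ such that $f(\varphi)(X(\xi))=\varphi(\xi)$ for all $\varphi\in\Theta_A(\mathcal E)$, $\xi\in\mathcal E$. *)

theory Defs
  imports Main
begin

text \<open>The discrete group G is a type of class group_add (written additively:
  0 is the unit, g + h the product, -g the inverse).\<close>

definition ring_action :: "('g::group_add \<Rightarrow> 'a::ring \<Rightarrow> 'a) \<Rightarrow> bool" where
  "ring_action \<alpha> \<longleftrightarrow>
     (\<forall>g. bij (\<alpha> g) \<and> (\<forall>a b. \<alpha> g (a + b) = \<alpha> g a + \<alpha> g b \<and> \<alpha> g (a * b) = \<alpha> g a * \<alpha> g b))
     \<and> \<alpha> 0 = id \<and> (\<forall>g h. \<alpha> (g + h) = \<alpha> g \<circ> \<alpha> h)"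

definition right_module :: "('e::ab_group_add \<Rightarrow> 'a::ring \<Rightarrow> 'e) \<Rightarrow> bool" where
  "right_module m \<longleftrightarrow>
     (\<forall>x y a. m (x + y) a = m x a + m y a) \<and>
     (\<forall>x a b. m x (a + b) = m x a + m x b) \<and>
     (\<forall>x a b. m x (a * b) = m (m x a) b)"

definition module_hom ::
  "('e::ab_group_add \<Rightarrow> 'a::ring \<Rightarrow> 'e) \<Rightarrow> ('f::ab_group_add \<Rightarrow> 'a \<Rightarrow> 'f) \<Rightarrow> ('e \<Rightarrow> 'f) \<Rightarrow> bool" where
  "module_hom mE mF X \<longleftrightarrow>
     (\<forall>x y. X (x + y) = X x + X y) \<and> (\<forall>x a. X (mE x a) = mF (X x) a)"

text \<open>Right functional A-module (E, S, Theta): m is the right A-action, S the G-action,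
  Theta the functional space, a subset of Hom_A(E,A) (A as right module over itself).\<close>
definition functional_module ::
  "('g::group_add \<Rightarrow> 'a::ring \<Rightarrow> 'a) \<Rightarrow> ('e::ab_group_add \<Rightarrow> 'a \<Rightarrow> 'e) \<Rightarrow> ('g \<Rightarrow> 'e \<Rightarrow> 'e)
    \<Rightarrow> ('e \<Rightarrow> 'a) set \<Rightarrow> bool" where
  "functional_module \<alpha> m S \<Theta> \<longleftrightarrow>
     right_module m \<and>
     (\<forall>g. bij (S g) \<and> (\<forall>x y. S g (x + y) = S g x + S g y) \<and> (\<forall>x a. S g (m x a) = m (S g x) (\<alpha> g a)))
     \<and> S 0 = id \<and> (\<forall>g h. S (g + h) = S g \<circ> S h)
     \<and> (\<forall>\<phi>\<in>\<Theta>. module_hom m (*) \<phi>)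
     \<and> (\<lambda>_. 0) \<in> \<Theta>
     \<and> (\<forall>\<phi>\<in>\<Theta>. \<forall>\<psi>\<in>\<Theta>. (\<lambda>x. \<phi> x + \<psi> x) \<in> \<Theta>)
     \<and> (\<forall>\<phi>\<in>\<Theta>. (\<lambda>x. - \<phi> x) \<in> \<Theta>)
     \<and> (\<forall>a. \<forall>\<phi>\<in>\<Theta>. (\<lambda>x. a * \<phi> x) \<in> \<Theta>)
     \<and> (\<forall>g. \<forall>\<phi>\<in>\<Theta>. \<alpha> g \<circ> \<phi> \<circ> S (- g) \<in> \<Theta>)"

definition theta_op :: "('e \<Rightarrow> 'a \<Rightarrow> 'e) \<Rightarrow> 'e \<Rightarrow> ('e \<Rightarrow> 'a) \<Rightarrow> 'e \<Rightarrow> 'e" where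
  "theta_op m \<eta> \<phi> = (\<lambda>\<xi>. m \<eta> (\<phi> \<xi>))"

definition compacts :: "('e::ab_group_add \<Rightarrow> 'a \<Rightarrow> 'e) \<Rightarrow> ('e \<Rightarrow> 'a) set \<Rightarrow> ('e \<Rightarrow> 'e) set" where
  "compacts m \<Theta> = {V. \<exists>(n::nat) \<eta> \<phi>. (\<forall>i<n. \<phi> i \<in> \<Theta>) \<and>
                        V = (\<lambda>\<xi>. \<Sum>i<n. theta_op m (\<eta> i) (\<phi> i) \<xi>)}"

definition adjointables :: "('e::ab_group_add \<Rightarrow> 'a::ring \<Rightarrow> 'e) \<Rightarrow> ('e \<Rightarrow> 'a) set \<Rightarrow> ('e \<Rightarrow> 'e) set" where
  "adjointables m \<Theta> = {V. module_hom m m V \<and> (\<forall>\<phi>\<in>\<Theta>. \<phi> \<circ> V \<in> \<Theta>)}"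

definition op_ring_hom :: "('e::plus \<Rightarrow> 'e) set \<Rightarrow> ('f::plus \<Rightarrow> 'f) set \<Rightarrow> (('e \<Rightarrow> 'e) \<Rightarrow> ('f \<Rightarrow> 'f)) \<Rightarrow> bool" where
  "op_ring_hom K K' \<sigma> \<longleftrightarrow> \<sigma> ` K \<subseteq> K' \<and>
     (\<forall>U\<in>K. \<forall>V\<in>K. \<sigma> (\<lambda>\<xi>. U \<xi> + V \<xi>) = (\<lambda>\<zeta>. \<sigma> U \<zeta> + \<sigma> V \<zeta>) \<and> \<sigma> (U \<circ> V) = \<sigma> U \<circ> \<sigma> V)"

definition functional_module_hom ::
  "('g::group_add \<Rightarrow> 'a::ring \<Rightarrow> 'a) \<Rightarrow> ('e::ab_group_add \<Rightarrow> 'a \<Rightarrow> 'e) \<Rightarrow> ('g \<Rightarrow> 'e \<Rightarrow> 'e) \<Rightarrow> ('e \<Rightarrow> 'a) set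
    \<Rightarrow> ('f::ab_group_add \<Rightarrow> 'a \<Rightarrow> 'f) \<Rightarrow> ('g \<Rightarrow> 'f \<Rightarrow> 'f) \<Rightarrow> ('f \<Rightarrow> 'a) set
    \<Rightarrow> ('e \<Rightarrow> 'f) \<Rightarrow> (('e \<Rightarrow> 'a) \<Rightarrow> ('f \<Rightarrow> 'a)) \<Rightarrow> bool" where
  "functional_module_hom \<alpha> mE S \<Theta>E mF T \<Theta>F X f \<longleftrightarrow>
     module_hom mE mF X \<and> (\<forall>g \<xi>. X (S g \<xi>) = T g (X \<xi>))
     \<and> f ` \<Theta>E \<subseteq> \<Theta>F
     \<and> (\<forall>\<phi>\<in>\<Theta>E. \<forall>\<psi>\<in>\<Theta>E. f (\<lambda>x. \<phi> x + \<psi> x) = (\<lambda>y. f \<phi> y + f \<psi> y))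
     \<and> (\<forall>a. \<forall>\<phi>\<in>\<Theta>E. f (\<lambda>x. a * \<phi> x) = (\<lambda>y. a * f \<phi> y))
     \<and> (\<forall>g. \<forall>\<phi>\<in>\<Theta>E. f (\<alpha> g \<circ> \<phi> \<circ> S (- g)) = \<alpha> g \<circ> f \<phi> \<circ> T (- g))
     \<and> (\<forall>\<phi>\<in>\<Theta>E. \<forall>\<xi>. f \<phi> (X \<xi>) = \<phi> \<xi>)"

end

theory Submission
  imports Defs
begin

lemma add_sum:
  fixes X :: "'a::ab_group_add \<Rightarrow> 'b::ab_group_add"
  assumes "\<And>x y. X (x + y) = X x + X y"
  shows "X (\<Sum>i<n. g i) = (\<Sum>i<(n::nat). X (g i))"
proof -
  have z: "X 0 = 0" using assms[of 0 0] add_cancel_right_right[of "X 0" "X 0"] by simp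
  show ?thesis by (induction n) (simp_all add: z assms)
qed

lemma compact_dep:
  assumes "V \<in> compacts mE \<Theta>E" "\<forall>\<phi>\<in>\<Theta>E. \<forall>\<xi>. f \<phi> (X \<xi>) = \<phi> \<xi>" "X a = X b"
  shows "V a = V b"
proof -
  obtain n \<eta> \<phi> where h: "\<forall>i<(n::nat). \<phi> i \<in> \<Theta>E"
    "V = (\<lambda>\<xi>. \<Sum>i<n. theta_op mE (\<eta> i) (\<phi> i) \<xi>)"
    using assms(1) unfolding compacts_def by blast
  have "\<phi> i a = \<phi> i b" if "i < n" for i
  proof -
    have "\<phi> i a = f (\<phi> i) (X a)" using assms(2) h(1) that by simp
    also have "\<dots> = f (\<phi> i) (X b)" using assms(3) by simp
    also have "\<dots> = \<phi> i b" using assms(2) h(1) that by simp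
    finally show ?thesis .
  qed
  then show ?thesis unfolding h(2) theta_op_def by (auto intro: sum.cong)
qed

lemma sigma_sum:
  fixes X :: "'e::ab_group_add \<Rightarrow> 'f::ab_group_add"
  assumes "\<And>x y. X (x + y) = X x + X y" "\<And>x a. X (mE x a) = mF (X x) a" "surj X"
    "\<forall>\<phi>\<in>\<Theta>E. \<forall>\<xi>. f \<phi> (X \<xi>) = \<phi> \<xi>" "\<forall>i<(n::nat). \<phi> i \<in> \<Theta>E"
  shows "(\<lambda>\<zeta>. X (\<Sum>i<n. theta_op mE (\<eta> i) (\<phi> i) (inv X \<zeta>)))
       = (\<lambda>\<zeta>. \<Sum>i<n. theta_op mF (X (\<eta> i)) (f (\<phi> i)) \<zeta>)"
proof
  fix \<zeta>
  have "X (\<Sum>i<n. theta_op mE (\<eta> i) (\<phi> i) (inv X \<zeta>)) = (\<Sum>i<n. X (theta_op mE (\<eta> i) (\<phi> i) (inv X \<zeta>)))"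
    by (rule add_sum[OF assms(1)])
  also have "\<dots> = (\<Sum>i<n. theta_op mF (X (\<eta> i)) (f (\<phi> i)) \<zeta>)"
  proof (rule sum.cong)
    fix i assume "i \<in> {..<n}"
    then have "\<phi> i (inv X \<zeta>) = f (\<phi> i) (X (inv X \<zeta>))"
      using assms(4,5) by simp
    then have "\<phi> i (inv X \<zeta>) = f (\<phi> i) \<zeta>"
      using surj_f_inv_f[OF assms(3)] by simp
    then show "X (theta_op mE (\<eta> i) (\<phi> i) (inv X \<zeta>)) = theta_op mF (X (\<eta> i)) (f (\<phi> i)) \<zeta>"
      by (simp add: theta_op_def assms(2))
  qed simp
  finally show "X (\<Sum>i<n. theta_op mE (\<eta> i) (\<phi> i) (inv X \<zeta>)) = (\<Sum>i<n. theta_op mF (X (\<eta> i)) (f (\<phi> i)) \<zeta>)" .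
qed

theorem lemma2p8:
  fixes \<alpha> :: "'g::group_add \<Rightarrow> 'a::ring \<Rightarrow> 'a"
    and mE :: "'e::ab_group_add \<Rightarrow> 'a \<Rightarrow> 'e" and S :: "'g \<Rightarrow> 'e \<Rightarrow> 'e" and \<Theta>E :: "('e \<Rightarrow> 'a) set"
    and mF :: "'f::ab_group_add \<Rightarrow> 'a \<Rightarrow> 'f" and T :: "'g \<Rightarrow> 'f \<Rightarrow> 'f" and \<Theta>F :: "('f \<Rightarrow> 'a) set"
    and X :: "'e \<Rightarrow> 'f" and f :: "('e \<Rightarrow> 'a) \<Rightarrow> ('f \<Rightarrow> 'a)"
  assumes "ring_action \<alpha>"
    and "functional_module \<alpha> mE S \<Theta>E"
    and "functional_module \<alpha> mF T \<Theta>F"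
    and "functional_module_hom \<alpha> mE S \<Theta>E mF T \<Theta>F X f"
    and "surj X"
  shows "\<exists>\<sigma>. op_ring_hom (compacts mE \<Theta>E) (compacts mF \<Theta>F) \<sigma>
            \<and> (\<forall>\<eta>. \<forall>\<phi>\<in>\<Theta>E. \<sigma> (theta_op mE \<eta> \<phi>) = theta_op mF (X \<eta>) (f \<phi>))
            \<and> inj_on f \<Theta>E
            \<and> (bij X \<and> bij_betw f \<Theta>E \<Theta>F \<longrightarrow>
                 bij_betw \<sigma> (compacts mE \<Theta>E) (compacts mF \<Theta>F)
                 \<and> (\<exists>\<tau>. op_ring_hom (adjointables mE \<Theta>E) (adjointables mF \<Theta>F) \<tau>
                        \<and> bij_betw \<tau> (adjointables mE \<Theta>E) (adjointables mF \<Theta>F)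
                        \<and> (\<forall>V\<in>compacts mE \<Theta>E. \<tau> V = \<sigma> V)))"
proof -
  have Xadd: "\<And>x y. X (x + y) = X x + X y" and Xmod: "\<And>x a. X (mE x a) = mF (X x) a"
    and fimg: "f ` \<Theta>E \<subseteq> \<Theta>F" and fp: "\<forall>\<phi>\<in>\<Theta>E. \<forall>\<xi>. f \<phi> (X \<xi>) = \<phi> \<xi>"
    using assms(4) unfolding functional_module_hom_def module_hom_def by auto
  have sX: "surj X" by fact
  define \<sigma> where "\<sigma> = (\<lambda>V \<zeta>. X (V (inv X \<zeta>)))"
  have th: "\<forall>\<eta>. \<forall>\<phi>\<in>\<Theta>E. \<sigma> (theta_op mE \<eta> \<phi>) = theta_op mF (X \<eta>) (f \<phi>)"
  proof (intro allI ballI ext)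
    fix \<eta> \<phi> \<zeta> assume "\<phi> \<in> \<Theta>E"
    then have "\<phi> (inv X \<zeta>) = f \<phi> \<zeta>" using fp surj_f_inv_f[OF sX] by metis
    then show "\<sigma> (theta_op mE \<eta> \<phi>) \<zeta> = theta_op mF (X \<eta>) (f \<phi>) \<zeta>"
      by (simp add: \<sigma>_def theta_op_def Xmod)
  qed
  have img: "\<sigma> V \<in> compacts mF \<Theta>F" if V0: "V \<in> compacts mE \<Theta>E" for V
  proof -
    obtain n \<eta> \<phi> where h: "\<forall>i<(n::nat). \<phi> i \<in> \<Theta>E"
      "V = (\<lambda>\<xi>. \<Sum>i<n. theta_op mE (\<eta> i) (\<phi> i) \<xi>)"
      using V0 unfolding compacts_def by blast
    have "\<sigma> V = (\<lambda>\<zeta>. \<Sum>i<n. theta_op mF (X (\<eta> i)) (f (\<phi> i)) \<zeta>)"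
      unfolding \<sigma>_def h(2) using sigma_sum[where X=X and mE=mE and mF=mF and f=f and \<Theta>E=\<Theta>E, OF Xadd Xmod sX fp h(1)] by simp
    moreover have "\<forall>i<n. f (\<phi> i) \<in> \<Theta>F" using h(1) fimg by blast
    ultimately show ?thesis unfolding compacts_def
      by (intro CollectI exI[of _ n] exI[of _ "\<lambda>i. X (\<eta> i)"] exI[of _ "\<lambda>i. f (\<phi> i)"]) simp
  qed
  have hom: "op_ring_hom (compacts mE \<Theta>E) (compacts mF \<Theta>F) \<sigma>"
    unfolding op_ring_hom_def
  proof (intro conjI ballI)
    show "\<sigma> ` compacts mE \<Theta>E \<subseteq> compacts mF \<Theta>F" using img by blast
  next
    fix U V
    show "\<sigma> (\<lambda>\<xi>. U \<xi> + V \<xi>) = (\<lambda>\<zeta>. \<sigma> U \<zeta> + \<sigma> V \<zeta>)" by (simp add: \<sigma>_def Xadd)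
  next
    fix U V assume U: "U \<in> compacts mE \<Theta>E"
    show "\<sigma> (U \<circ> V) = \<sigma> U \<circ> \<sigma> V"
    proof
      fix \<zeta>
      have "X (inv X (X (V (inv X \<zeta>)))) = X (V (inv X \<zeta>))" using surj_f_inv_f[OF sX] by simp
      then have "U (inv X (X (V (inv X \<zeta>)))) = U (V (inv X \<zeta>))"
        by (rule compact_dep[where f=f and X=X, OF U fp])
      then show "\<sigma> (U \<circ> V) \<zeta> = (\<sigma> U \<circ> \<sigma> V) \<zeta>" by (simp add: \<sigma>_def)
    qed
  qed
  have injf: "inj_on f \<Theta>E"
  proof (rule inj_onI)
    fix \<phi> \<psi> assume a: "\<phi> \<in> \<Theta>E" "\<psi> \<in> \<Theta>E" "f \<phi> = f \<psi>"
    show "\<phi> = \<psi>"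
    proof
      fix \<xi> show "\<phi> \<xi> = \<psi> \<xi>" using fp a by metis
    qed
  qed
  have bijpart: "bij_betw \<sigma> (compacts mE \<Theta>E) (compacts mF \<Theta>F)
                 \<and> (\<exists>\<tau>. op_ring_hom (adjointables mE \<Theta>E) (adjointables mF \<Theta>F) \<tau>
                        \<and> bij_betw \<tau> (adjointables mE \<Theta>E) (adjointables mF \<Theta>F)
                        \<and> (\<forall>V\<in>compacts mE \<Theta>E. \<tau> V = \<sigma> V))"
    if bX: "bij X" and bf: "bij_betw f \<Theta>E \<Theta>F"
  proof -
    have iX: "inj X" using bX bij_is_inj by blast
    have ifX: "\<And>x. inv X (X x) = x" using inv_f_f[OF iX] .
    have fiX: "\<And>x. X (inv X x) = x" using surj_f_inv_f[OF sX] .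
    have iadd: "inv X (x + y) = inv X x + inv X y" for x y
    proof -
      have "inv X (x + y) = inv X (X (inv X x + inv X y))" by (simp add: Xadd fiX)
      then show ?thesis by (simp only: ifX)
    qed
    have imod: "inv X (mF x a) = mE (inv X x) a" for x a
    proof -
      have "inv X (mF x a) = inv X (X (mE (inv X x) a))" by (simp add: Xmod fiX)
      then show ?thesis by (simp only: ifX)
    qed
    have fimg2: "f ` \<Theta>E = \<Theta>F" using bf by (simp add: bij_betw_def)
    have sinj: "U = V" if "\<sigma> U = \<sigma> V" for U V
    proof
      fix \<xi>
      have "\<sigma> U (X \<xi>) = \<sigma> V (X \<xi>)" using that by simp
      then have "X (U \<xi>) = X (V \<xi>)" by (simp add: \<sigma>_def ifX)
      then show "U \<xi> = V \<xi>" using iX by (simp add: inj_eq)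
    qed
    have b1: "bij_betw \<sigma> (compacts mE \<Theta>E) (compacts mF \<Theta>F)"
      unfolding bij_betw_def
    proof (intro conjI)
      show "inj_on \<sigma> (compacts mE \<Theta>E)" by (meson inj_onI sinj)
      show "\<sigma> ` compacts mE \<Theta>E = compacts mF \<Theta>F"
      proof
        show "\<sigma> ` compacts mE \<Theta>E \<subseteq> compacts mF \<Theta>F" using img by blast
      next
        show "compacts mF \<Theta>F \<subseteq> \<sigma> ` compacts mE \<Theta>E"
        proof
          fix W assume "W \<in> compacts mF \<Theta>F"
          then obtain n \<eta>' \<psi> where h: "\<forall>i<(n::nat). \<psi> i \<in> \<Theta>F"
            "W = (\<lambda>\<xi>. \<Sum>i<n. theta_op mF (\<eta>' i) (\<psi> i) \<xi>)"
            unfolding compacts_def by blast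
          define \<phi> where "\<phi> = (\<lambda>i. inv_into \<Theta>E f (\<psi> i))"
          define \<eta> where "\<eta> = (\<lambda>i. inv X (\<eta>' i))"
          have p1: "\<forall>i<n. \<phi> i \<in> \<Theta>E" using h(1) fimg2 unfolding \<phi>_def
            by (auto intro: inv_into_into)
          have p2: "\<forall>i<n. f (\<phi> i) = \<psi> i" using h(1) fimg2 unfolding \<phi>_def
            by (simp add: f_inv_into_f)
          define V where "V = (\<lambda>\<xi>. \<Sum>i<n. theta_op mE (\<eta> i) (\<phi> i) \<xi>)"
          have V: "V \<in> compacts mE \<Theta>E" unfolding compacts_def V_def using p1
            by (intro CollectI exI[of _ n] exI[of _ \<eta>] exI[of _ \<phi>]) simp
          have "\<sigma> V = (\<lambda>\<zeta>. \<Sum>i<n. theta_op mF (X (\<eta> i)) (f (\<phi> i)) \<zeta>)"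
            unfolding \<sigma>_def V_def using sigma_sum[where X=X and mE=mE and mF=mF and f=f and \<Theta>E=\<Theta>E, OF Xadd Xmod sX fp p1] by simp
          also have "\<dots> = W" unfolding h(2) \<eta>_def fiX using p2
            by (auto intro!: sum.cong)
          finally show "W \<in> \<sigma> ` compacts mE \<Theta>E" using V by blast
        qed
      qed
    qed
    have aimg: "\<sigma> V \<in> adjointables mF \<Theta>F" if V: "V \<in> adjointables mE \<Theta>E" for V
    proof -
      have Vm: "module_hom mE mE V" and Vt: "\<forall>\<phi>\<in>\<Theta>E. \<phi> \<circ> V \<in> \<Theta>E"
        using V unfolding adjointables_def by auto
      have "module_hom mF mF (\<sigma> V)" using Vm
        unfolding module_hom_def \<sigma>_def by (simp add: iadd imod Xadd Xmod)
      moreover have "\<psi> \<circ> \<sigma> V \<in> \<Theta>F" if ps: "\<psi> \<in> \<Theta>F" for \<psi>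
      proof -
        have "\<psi> \<in> f ` \<Theta>E" using ps fimg2 by simp
        then obtain \<phi> where ph: "\<phi> \<in> \<Theta>E" "\<psi> = f \<phi>" by blast
        have "\<psi> \<circ> \<sigma> V = f (\<phi> \<circ> V)"
        proof
          fix \<zeta>
          have "(\<psi> \<circ> \<sigma> V) \<zeta> = \<phi> (V (inv X \<zeta>))" using ph fp by (simp add: \<sigma>_def)
          also have "\<dots> = f (\<phi> \<circ> V) (X (inv X \<zeta>))" using fp Vt ph(1) by simp
          finally show "(\<psi> \<circ> \<sigma> V) \<zeta> = f (\<phi> \<circ> V) \<zeta>" by (simp add: fiX)
        qed
        then show ?thesis using Vt ph(1) fimg by blast
      qed
      ultimately show ?thesis unfolding adjointables_def by blast
    qed
    have h2: "op_ring_hom (adjointables mE \<Theta>E) (adjointables mF \<Theta>F) \<sigma>"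
      unfolding op_ring_hom_def
    proof (intro conjI ballI)
      show "\<sigma> ` adjointables mE \<Theta>E \<subseteq> adjointables mF \<Theta>F" using aimg by blast
    next
      fix U V
      show "\<sigma> (\<lambda>\<xi>. U \<xi> + V \<xi>) = (\<lambda>\<zeta>. \<sigma> U \<zeta> + \<sigma> V \<zeta>)" by (simp add: \<sigma>_def Xadd)
      show "\<sigma> (U \<circ> V) = \<sigma> U \<circ> \<sigma> V" by (simp add: \<sigma>_def ifX fun_eq_iff)
    qed
    have b2: "bij_betw \<sigma> (adjointables mE \<Theta>E) (adjointables mF \<Theta>F)"
      unfolding bij_betw_def
    proof (intro conjI)
      show "inj_on \<sigma> (adjointables mE \<Theta>E)" by (meson inj_onI sinj)
      show "\<sigma> ` adjointables mE \<Theta>E = adjointables mF \<Theta>F"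
      proof
        show "\<sigma> ` adjointables mE \<Theta>E \<subseteq> adjointables mF \<Theta>F" using aimg by blast
      next
        show "adjointables mF \<Theta>F \<subseteq> \<sigma> ` adjointables mE \<Theta>E"
        proof
          fix W assume W: "W \<in> adjointables mF \<Theta>F"
          have Wm: "module_hom mF mF W" and Wt: "\<forall>\<psi>\<in>\<Theta>F. \<psi> \<circ> W \<in> \<Theta>F"
            using W unfolding adjointables_def by auto
          define V where "V = (\<lambda>\<xi>. inv X (W (X \<xi>)))"
          have "module_hom mE mE V" using Wm
            unfolding module_hom_def V_def by (simp add: iadd imod Xadd Xmod)
          moreover have "\<phi> \<circ> V \<in> \<Theta>E" if ph: "\<phi> \<in> \<Theta>E" for \<phi>
          proof -
            have "f \<phi> \<circ> W \<in> \<Theta>F" using Wt ph fimg by blast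
            then have "f \<phi> \<circ> W \<in> f ` \<Theta>E" using fimg2 by simp
            then obtain \<phi>' where p': "\<phi>' \<in> \<Theta>E" "f \<phi> \<circ> W = f \<phi>'" by (rule imageE) simp
            have "\<phi> \<circ> V = \<phi>'"
            proof
              fix \<xi>
              have "(\<phi> \<circ> V) \<xi> = f \<phi> (X (inv X (W (X \<xi>))))" unfolding V_def using fp ph
                by simp
              also have "\<dots> = f \<phi> (W (X \<xi>))" by (simp only: fiX)
              also have "\<dots> = (f \<phi> \<circ> W) (X \<xi>)" by simp
              also have "\<dots> = f \<phi>' (X \<xi>)" using p'(2) by simp
              also have "\<dots> = \<phi>' \<xi>" using fp p'(1) by simp
              finally show "(\<phi> \<circ> V) \<xi> = \<phi>' \<xi>" .
            qed
            then show ?thesis using p'(1) by simp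
          qed
          ultimately have "V \<in> adjointables mE \<Theta>E" unfolding adjointables_def by blast
          moreover have "\<sigma> V = W" by (simp add: \<sigma>_def V_def fiX)
          ultimately show "W \<in> \<sigma> ` adjointables mE \<Theta>E" by blast
        qed
      qed
    qed
    show ?thesis using b1 h2 b2 by auto
  qed
  show ?thesis
    apply (rule exI[of _ \<sigma>])
    using hom th injf bijpart by simp
qed

end
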